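(* Let $p$ be a prime with $p\equiv 1\pmod 3$ and let $a$ be a positive integer. Then $$\sum_{k=1}^{\frac{2}{3}(p^a-1)}\binom{2k}{k}\equiv 0\pmod{p^2}.$$
   Context: Note that $\frac23(p^a-1)$ is a positive integer since $p^a\equiv1\pmod 3$. *)

theory Defs
  imports "HOL-Number_Theory.Number_Theory"
begin

end

theory Submission
  imports Defs "HOL-Computational_Algebra.Formal_Power_Series"
begin

definition chi :: "int \<Rightarrow> int" where
  "chi x = (if x mod 3 = 1 then 1 else if x mod 3 = 2 then -1 else 0)"

lemma chi_sum3: "chi x + chi (x+1) + chi (x+2) = 0"
  unfolding chi_def by (auto simp: mod_simps) presburger+

lemma chi_0[simp]: "chi 0 = 0" and chi_1[simp]: "chi 1 = 1" and chi_2[simp]: "chi 2 = -1"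
  by (auto simp: chi_def)

lemma chi_double: "chi (2*x) = - chi x"
  unfolding chi_def by presburger

definition gb :: "int \<Rightarrow> nat \<Rightarrow> int" where
  "gb a k = (if 0 \<le> a then int (nat a choose k) else (-1)^k * int ((k + nat (-a) - 1) choose k))"

lemma gb_rat: "(of_int (gb a k) :: rat) = of_int a gchoose k"
proof (cases "0 \<le> a")
  case True
  then obtain n where "a = int n" using nonneg_int_cases by blast
  then show ?thesis by (simp add: gb_def binomial_gbinomial)
next
  case False
  define n where "n = nat (-a)"
  have n: "a = - int n" "n > 0" using False by (auto simp: n_def)
  have "(of_int (gb a k) :: rat) = (-1)^k * of_nat ((k + n - 1) choose k)"
    using n by (simp add: gb_def)
  also have "\<dots> = (-1)^k * ((of_nat n + of_nat k - 1) gchoose k)"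
    using n by (simp add: binomial_gbinomial of_nat_diff algebra_simps)
  also have "\<dots> = (- of_nat n) gchoose k" by (simp add: gbinomial_minus)
  finally show ?thesis using n by simp
qed

lemma gb_Suc_Suc: "gb (a+1) (Suc k) = gb a k + gb a (Suc k)"
proof -
  have "(of_int (gb (a+1) (Suc k)) :: rat) = of_int (gb a k + gb a (Suc k))"
    by (simp add: gb_rat gbinomial_Suc_Suc)
  then show ?thesis by (simp only: of_int_eq_iff)
qed

lemma gb_0[simp]: "gb a 0 = 1" by (simp add: gb_def)
lemma gb_nat[simp]: "gb (int n) k = int (n choose k)" by (simp add: gb_def)

definition LL :: "int \<Rightarrow> nat \<Rightarrow> int" where
  "LL a M = (\<Sum>k\<le>M. (gb a k) * chi (int M + 1 - int k))"

lemma L_0[simp]: "LL a 0 = 1"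
  by (simp add: LL_def)

lemma L_pascal: "LL (a+1) (Suc M) = LL a M + LL a (Suc M)"
proof -
  have "LL (a+1) (Suc M) = chi (int M + 2) + (\<Sum>k\<le>M. (gb (a+1) (Suc k)) * chi (int M + 1 - int k))"
    unfolding LL_def by (subst sum.atMost_Suc_shift) (simp add: algebra_simps)
  also have "\<dots> = chi (int M + 2) + (\<Sum>k\<le>M. (gb a k) * chi (int M + 1 - int k))
       + (\<Sum>k\<le>M. (gb a (Suc k)) * chi (int M + 1 - int k))"
    by (simp only: gb_Suc_Suc distrib_right sum.distrib add.assoc)
  also have "LL a (Suc M) = chi (int M + 2) + (\<Sum>k\<le>M. (gb a (Suc k)) * chi (int M + 1 - int k))"
    unfolding LL_def by (subst sum.atMost_Suc_shift) (simp add: algebra_simps)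
  ultimately show ?thesis unfolding LL_def by simp
qed

lemma L_three: "LL a (Suc (Suc M)) + LL a (Suc M) + LL a M = gb a (Suc (Suc M))"
proof -
  have z: "(\<Sum>k\<le>M. (gb a k) * chi (int M + 3 - int k)) + (\<Sum>k\<le>M. (gb a k) * chi (int M + 2 - int k))
      + (\<Sum>k\<le>M. (gb a k) * chi (int M + 1 - int k)) = 0"
  proof -
    have "(\<Sum>k\<le>M. (gb a k) * chi (int M + 3 - int k)) + (\<Sum>k\<le>M. (gb a k) * chi (int M + 2 - int k))
      + (\<Sum>k\<le>M. (gb a k) * chi (int M + 1 - int k))
      = (\<Sum>k\<le>M. (gb a k) * (chi (int M + 1 - int k) + chi (int M + 1 - int k + 1) + chi (int M + 1 - int k + 2)))"
      by (simp add: sum.distrib algebra_simps)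
    also have "\<dots> = 0" by (simp only: chi_sum3) simp
    finally show ?thesis .
  qed
  show ?thesis
    unfolding LL_def using z
    by (simp add: sum.atMost_Suc algebra_simps chi_def)
qed

lemma L_closed: "K \<le> Suc M \<Longrightarrow> LL (int K) M = (-1)^K * chi (int M + 1 + int K)"
proof (induction K arbitrary: M)
  case 0
  have "(\<Sum>k\<le>M. gb 0 k * chi (int M + 1 - int k)) = (\<Sum>k\<le>M. if k = 0 then chi (int M + 1 - int k) else 0)"
    by (rule sum.cong) (auto simp: gb_def)
  then show ?case by (simp add: LL_def)
next
  case (Suc K)
  show ?case
  proof (cases M)
    case 0
    with Suc show ?thesis by simp
  next
    case (Suc M')
    have "LL (int (Suc K)) M = LL (int K) M' + LL (int K) (Suc M')"
      using L_pascal[of "int K" M'] Suc by (simp add: add.commute)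
    also have "\<dots> = (-1)^K * (chi (int M' + 1 + int K) + chi (int M' + 1 + int K + 1))"
      using Suc.IH[of M'] Suc.IH[of "Suc M'"] Suc.prems Suc by (simp add: algebra_simps)
    also have "\<dots> = (-1)^K * (- chi (int M' + 1 + int K + 2))"
    proof -
      have "chi (int M' + 1 + int K) + chi (int M' + 1 + int K + 1) = - chi (int M' + 1 + int K + 2)"
        using chi_sum3[of "int M' + 1 + int K"] by linarith
      then show ?thesis by (simp only:)
    qed
    finally show ?thesis using Suc by (simp add: algebra_simps)
  qed
qed

lemma L_refl: "LL (- int K) M = (-1)^M * LL (int (K + M + 1)) M"
proof (induction M arbitrary: K)
  case 0
  show ?case by simp
next
  case (Suc M)
  note IHM = Suc.IH
  show ?case
  proof (induction K)
    case 0
    have a: "LL (- int 0) (Suc M) = chi (int M + 2)" using L_closed[of 0 "Suc M"] by (simp add: algebra_simps)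
    have b: "LL (int (0 + Suc M + 1)) (Suc M) = (-1)^(M+2) * chi (2 * (int M + 2))"
      using L_closed[of "M+2" "Suc M"] by (simp add: algebra_simps)
    show ?case using a b chi_double[of "int M + 2"] by simp
  next
    case (Suc K)
    have p: "LL (- int (Suc K) + 1) (Suc M) = LL (- int (Suc K)) M + LL (- int (Suc K)) (Suc M)"
      by (rule L_pascal)
    have q: "- int (Suc K) + 1 = - int K" by simp
    have r: "LL (int (K + M + 2) + 1) (Suc M) = LL (int (K + M + 2)) M + LL (int (K + M + 2)) (Suc M)"
      by (rule L_pascal)
    have s: "int (K + M + 2) + 1 = int (Suc K + Suc M + 1)" by simp
    have "LL (- int (Suc K)) (Suc M) = LL (- int K) (Suc M) - LL (- int (Suc K)) M"
      using p q by simp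
    also have "\<dots> = (-1)^(Suc M) * LL (int (K + M + 2)) (Suc M) - (-1)^M * LL (int (K + M + 2)) M"
      using Suc.IH IHM[of "Suc K"] by simp
    also have "\<dots> = (-1)^(Suc M) * (LL (int (K + M + 2)) (Suc M) + LL (int (K + M + 2)) M)"
      by (simp add: algebra_simps)
    also have "\<dots> = (-1)^(Suc M) * LL (int (Suc K + Suc M + 1)) (Suc M)"
      using r s by simp
    finally show ?case .
  qed
qed

lemma L_step2: "LL (a+2) (Suc (Suc M)) = LL a (Suc M) + gb a (Suc (Suc M))"
proof -
  have "LL (a+2) (Suc (Suc M)) = LL ((a+1)+1) (Suc (Suc M))" by (simp add: algebra_simps)
  also have "\<dots> = LL (a+1) (Suc M) + LL (a+1) (Suc (Suc M))" by (rule L_pascal)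
  also have "\<dots> = LL a M + LL a (Suc M) + (LL a (Suc M) + LL a (Suc (Suc M)))"
    by (simp only: L_pascal)
  also have "\<dots> = LL a (Suc M) + (LL a (Suc (Suc M)) + LL a (Suc M) + LL a M)" by simp
  also have "\<dots> = LL a (Suc M) + gb a (Suc (Suc M))" by (simp only: L_three)
  finally show ?thesis .
qed

definition SS :: "nat \<Rightarrow> int" where "SS M = (\<Sum>k\<le>M. int ((2*k) choose k))"

lemma L_S: "LL (int (2*M+2)) M = SS M"
proof (induction M)
  case 0
  then show ?case by (simp add: SS_def)
next
  case (Suc M)
  show ?case
  proof (cases M)
    case 0
    then show ?thesis by (simp add: SS_def LL_def numeral_eq_Suc gb_def)
  next
    case (Suc M')
    have e1: "int (2*M+2) + 2 = int (2 * Suc M + 2)" by simp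
    have "LL (int (2 * Suc M + 2)) (Suc (Suc M')) = LL (int (2*M+2)) (Suc M') + int ((2*M+2) choose (Suc (Suc M')))"
      using L_step2[of "int (2*M+2)" M'] by (simp only: e1 gb_nat)
    then have "LL (int (2 * Suc M + 2)) (Suc M) = LL (int (2*M+2)) M + int ((2*M+2) choose (Suc M))"
      using Suc by (simp only:)
    moreover have "SS (Suc M) = SS M + int ((2*M+2) choose (Suc M))"
      by (simp add: SS_def del: binomial_Suc_Suc)
    ultimately show ?thesis using Suc.IH by simp
  qed
qed

lemma L_S2: "2 * LL (int (2*M+1)) M = SS M + 1"
proof (induction M)
  case 0
  then show ?case by (simp add: SS_def)
next
  case (Suc M)
  have bin: "(2*M+2) choose (Suc M) = 2 * ((2*M+1) choose (Suc M))"
  proof -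
    have "(2*M+2) choose (Suc M) = ((2*M+1) choose M) + ((2*M+1) choose (Suc M))"
      by (simp add: numeral_eq_Suc)
    moreover have "(2*M+1) choose M = (2*M+1) choose (Suc M)"
      using binomial_symmetric[of M "2*M+1"] by (simp add: numeral_eq_Suc)
    ultimately show ?thesis by simp
  qed
  have step: "LL (int (2 * Suc M + 1)) (Suc M) = LL (int (2*M+1)) M + int ((2*M+1) choose (Suc M))"
  proof (cases M)
    case 0
    then show ?thesis by (simp add: LL_def numeral_eq_Suc gb_def)
  next
    case (Suc M')
    have e1: "int (2*M+1) + 2 = int (2 * Suc M + 1)" by simp
    have "LL (int (2 * Suc M + 1)) (Suc (Suc M')) = LL (int (2*M+1)) (Suc M') + int ((2*M+1) choose (Suc (Suc M')))"
      using L_step2[of "int (2*M+1)" M'] by (simp only: e1 gb_nat)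
    then show ?thesis using Suc by (simp only:)
  qed
  have "SS (Suc M) = SS M + int ((2*M+2) choose (Suc M))"
    by (simp add: SS_def del: binomial_Suc_Suc)
  then show ?case using step Suc.IH bin by simp
qed

unbundle fps_syntax

definition GG :: "rat fps" where "GG = Abs_fps (\<lambda>j. of_int (chi (int j + 1)))"

lemma L_fps: "(of_int (LL a M) :: rat) = (fps_binomial (of_int a) * GG) $ M"
proof -
  have "(fps_binomial (of_int a) * GG) $ M = (\<Sum>i\<in>{..M}. (of_int a gchoose i) * of_int (chi (int (M - i) + 1)))"
    by (simp add: fps_mult_nth GG_def atLeast0AtMost)
  also have "\<dots> = (\<Sum>i\<le>M. of_int (gb a i * chi (int M + 1 - int i)))"
    by (rule sum.cong) (auto simp: gb_rat of_nat_diff diff_add_eq)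
  finally show ?thesis by (simp add: LL_def)
qed

lemma L_conv: "LL (a + b) M = (\<Sum>i\<le>M. gb a i * LL b (M - i))"
proof -
  have "(of_int (LL (a + b) M) :: rat) = (fps_binomial (of_int a) * (fps_binomial (of_int b) * GG)) $ M"
    by (simp add: L_fps fps_binomial_add_mult mult.assoc)
  also have "\<dots> = (\<Sum>i\<in>{..M}. (of_int a gchoose i) * (fps_binomial (of_int b) * GG) $ (M - i))"
    by (simp add: fps_mult_nth atLeast0AtMost)
  also have "\<dots> = of_int (\<Sum>i\<le>M. gb a i * LL b (M - i))"
    by (simp add: L_fps gb_rat)
  finally show ?thesis by (simp only: of_int_eq_iff)
qed

lemma p_dvd_choose_pow:
  fixes p :: nat
  assumes "prime p" "0 < j" "j < p^a"
  shows "p dvd (p^a choose j)"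
proof (rule ccontr)
  assume nd: "\<not> p dvd (p^a choose j)"
  have "j * (p^a choose j) = p^a * ((p^a - 1) choose (j - 1))"
    using assms(2) by (rule times_binomial_minus1_eq)
  then have "p^a dvd j * (p^a choose j)" by simp
  moreover have "coprime (p^a) (p^a choose j)"
    using nd assms(1) by (simp add: prime_imp_coprime)
  ultimately have "p^a dvd j" by (simp add: coprime_dvd_mult_left_iff)
  then have "p^a \<le> j" using assms(2) by (simp add: dvd_imp_le)
  then show False using assms(3) by simp
qed

lemma cong_choose2:
  fixes p :: nat
  assumes "prime p" "0 < i" "i < p^a"
  shows "int (p^2) dvd int ((2 * p^a) choose i) - 2 * int ((p^a) choose i)"
proof -
  define n where "n = p^a"
  obtain i' where i': "i = Suc i'" using assms(2) by (cases i) auto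
  have "(2*n) choose i = (\<Sum>k=0..i. (n choose k) * (n choose (i - k)))"
    using binomial_Vandermonde[of n n i] by (simp add: mult_2)
  also have "\<dots> = (n choose 0) * (n choose i) + (\<Sum>k=Suc 0..i. (n choose k) * (n choose (i - k)))"
    by (simp add: sum.atLeast_Suc_atMost)
  also have "(\<Sum>k=Suc 0..i. (n choose k) * (n choose (i - k))) = (\<Sum>k=Suc 0..i'. (n choose k) * (n choose (i - k))) + (n choose i)"
    using i' by simp
  finally have eq: "(2*n) choose i = 2 * (n choose i) + (\<Sum>k=Suc 0..i'. (n choose k) * (n choose (i - k)))"
    by simp
  have "p^2 dvd (\<Sum>k=Suc 0..i'. (n choose k) * (n choose (i - k)))"
  proof (rule dvd_sum)
    fix k assume k: "k \<in> {Suc 0..i'}"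
    have "p dvd (n choose k)" unfolding n_def
      using k i' assms by (intro p_dvd_choose_pow) auto
    moreover have "p dvd (n choose (i - k))" unfolding n_def
      using k i' assms by (intro p_dvd_choose_pow) auto
    ultimately show "p^2 dvd (n choose k) * (n choose (i - k))"
      by (simp add: power2_eq_square mult_dvd_mono)
  qed
  then have "int (p^2) dvd int (\<Sum>k=Suc 0..i'. (n choose k) * (n choose (i - k)))"
    by (simp only: int_dvd_int_iff)
  then show ?thesis unfolding n_def[symmetric] using eq by simp
qed

lemma sum_comb: "(\<Sum>i\<in>S. (f i - 2*g i + h i) * (l i::int)) = (\<Sum>i\<in>S. f i * l i) - 2 * (\<Sum>i\<in>S. g i * l i) + (\<Sum>i\<in>S. h i * l i)"
  by (simp add: sum.distrib sum_subtractf sum_distrib_left ring_distribs mult.assoc)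

theorem theorem1p2:
  fixes p a :: nat
  assumes "prime p" and "[p = 1] (mod 3)" and "a > 0"
  shows "[(\<Sum>k = 1..2 * (p ^ a - 1) div 3. (2 * k) choose k) = 0] (mod p\<^sup>2)"
proof -
  define n where "n = p^a"
  define m where "m = 2 * (n - 1) div 3"
  have pm: "p mod 3 = 1" using assms(2) by (simp add: cong_def)
  have "[p^a = 1^a] (mod 3)" using assms(2) by (rule cong_pow)
  then have n3: "n mod 3 = 1" by (simp add: cong_def n_def)
  have p3: "p \<noteq> 3" using pm by auto
  have p2: "p \<noteq> 2" using pm by auto
  have oddp: "odd p"
  proof
    assume "even p"
    then have "2 dvd p" by simp
    then have "2 = p" using assms(1) two_is_prime_nat primes_dvd_imp_eq by blast
    then show False using p2 by simp
  qed
  have oddn: "odd n" unfolding n_def using oddp by simp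
  define q where "q = n div 3"
  have nq: "n = 3*q+1" using n3 div_mult_mod_eq[of n 3] unfolding q_def by linarith
  have mq: "m = 2*q" unfolding m_def nq by simp
  have m3: "3 * m = 2 * n - 2" using mq nq by simp
  have evq: "even q" using oddn nq by simp
  have meven: "even m" using mq by simp
  define e where "e = n - m"
  have eq: "e = q + 1" unfolding e_def nq mq by simp
  have odde: "odd e" using eq evq by simp
  have mn: "m < n" using mq nq by simp
  have em: "e \<le> Suc m" using eq mq by simp
  have hS: "LL (int (2*n) + (- int m)) m = SS m"
  proof -
    have "int (2*n) + (- int m) = int (2*m+2)" using mq nq by simp
    then show ?thesis using L_S[of m] by (simp only:)
  qed
  have hU: "LL (int n + (- int m)) m = 1"
  proof -
    have 1: "int n + (- int m) = int e" using mn unfolding e_def by simp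
    have 2: "int m + 1 + int e = int n + 1" using mn unfolding e_def by simp
    have "(int n + 1) mod 3 = 2" using nq by simp
    then have 3: "chi (int n + 1) = -1" unfolding chi_def by simp
    have "LL (int e) m = 1" using L_closed[OF em] 2 3 odde by simp
    then show ?thesis using 1 by (simp only:)
  qed
  define c where "c = LL (- int m) m"
  have hc: "2 * c = SS m + 1"
  proof -
    have "c = (-1)^m * LL (int (m + m + 1)) m" using L_refl[of m m] unfolding c_def .
    then have "c = LL (int (2*m+1)) m" using meven by (simp only: neg_one_even_power mult_2 mult_1)
    then show ?thesis using L_S2[of m] by simp
  qed
  define Lm where "Lm i = LL (- int m) (m - i)" for i
  have c1: "SS m = (\<Sum>i\<le>m. int ((2*n) choose i) * Lm i)"
  proof -
    have "SS m = (\<Sum>i\<le>m. gb (int (2*n)) i * LL (- int m) (m - i))"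
      using L_conv[of "int (2*n)" "- int m" m] hS by (simp only:)
    then show ?thesis unfolding Lm_def by (simp only: gb_nat)
  qed
  have c2: "1 = (\<Sum>i\<le>m. int (n choose i) * Lm i)"
  proof -
    have "1 = (\<Sum>i\<le>m. gb (int n) i * LL (- int m) (m - i))"
      using L_conv[of "int n" "- int m" m] hU by (simp only:)
    then show ?thesis unfolding Lm_def by (simp only: gb_nat)
  qed
  have c3: "c = (\<Sum>i\<le>m. (if i = 0 then 1 else 0) * Lm i)"
  proof -
    have "(\<Sum>i\<le>m. (if i = 0 then 1 else 0) * Lm i) = (\<Sum>i\<le>m. if i = 0 then Lm i else 0)"
      by (rule sum.cong) auto
    also have "\<dots> = Lm 0" by (simp add: sum.delta)
    finally show ?thesis unfolding c_def Lm_def by simp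
  qed
  have comb: "SS m - 2 + c = (\<Sum>i\<le>m. (int ((2*n) choose i) - 2 * int (n choose i) + (if i = 0 then 1 else 0)) * Lm i)"
    unfolding sum_comb using c1 c2 c3 by linarith
  have "int (p^2) dvd SS m - 2 + c"
    unfolding comb
  proof (rule dvd_sum)
    fix i assume i: "i \<in> {..m}"
    show "int (p^2) dvd (int ((2*n) choose i) - 2 * int (n choose i) + (if i = 0 then 1 else 0)) * Lm i"
    proof (cases "i = 0")
      case True then show ?thesis by simp
    next
      case False
      then have "int (p^2) dvd int ((2*n) choose i) - 2 * int (n choose i)"
        using cong_choose2[OF assms(1), of i a] i mn unfolding n_def by auto
      then show ?thesis using False by simp
    qed
  qed
  then have "int (p^2) dvd 2 * (SS m - 2 + c)" by (rule dvd_mult)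
  also have "2 * (SS m - 2 + c) = 3 * (SS m - 1)" using hc by (smt (verit))
  finally have d3: "int (p^2) dvd 3 * (SS m - 1)" .
  have "coprime p 3" using assms(1) p3 by (simp add: primes_coprime)
  then have "coprime (p^2) 3" by simp
  then have "coprime (int (p^2)) 3" by (metis coprime_int_iff of_nat_numeral)
  then have d: "int (p^2) dvd SS m - 1" using d3 coprime_dvd_mult_right_iff[of "int (p^2)" 3 "SS m - 1"] by blast
  have sp: "(\<Sum>k\<le>m. (2*k) choose k) = 1 + (\<Sum>k=1..m. (2*k) choose k)"
    by (simp add: atMost_atLeast0 sum.atLeast_Suc_atMost)
  have "SS m - 1 = int (\<Sum>k=1..m. (2*k) choose k)"
    unfolding SS_def using sp by (simp flip: of_nat_sum)
  then have "p^2 dvd (\<Sum>k=1..m. (2*k) choose k)" using d by (simp only: int_dvd_int_iff)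
  then show ?thesis unfolding m_def n_def by (simp add: cong_0_iff)
qed

end
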